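(* Let $x$ be a trajectory solution of (MTRIGS). For $i=1,\dots,m$ define $\mathcal W_i(t):=f_i(x(t))+\frac{\beta}{2t^p}\|x(t)\|^2+\frac12\|\dot x(t)\|^2$. Then for every $i$ and almost every $t\ge t_0$, $$\frac{d}{dt}\mathcal W_i(t)\le-\frac{p\beta}{2t^{p+1}}\|x(t)\|^2-\frac{\alpha}{t^q}\|\dot x(t)\|^2\le0 .$$ Moreover, with $a\in\mathbb R^m$, $a_i:=\frac{\beta}{2t_0^p}\|x_0\|^2+\frac12\|v_0\|^2$, one has $x(t)\in\mathcal L(F,F(x_0)+a)$ for all $t\ge t_0$.
   Context: $\mathcal H$ real Hilbert space; $f_1,\dots,f_m$ convex, continuously differentiable with Lipschitz gradients; $F=(f_1,\dots,f_m)^\top$; $\mathcal L(F,b):=\{x:f_i(x)\le b_i\ \forall i\}$. Parameters $t_0>0$, $\alpha,\beta>0$, $q\in(0,1]$, $p\in(0,2]$, initial data $x_0,v_0$. $C(x):=\operatorname{conv}\{\nabla f_i(x)\}$. A trajectory solution of (MTRIGS) is $x:[t_0,\infty)\to\mathcal H$, continuously differentiable, with $\dot x$ absolutely continuous on each $[t_0,T]$ and a.e. derivative $\ddot x$ (Bochner measurable, $\dot x(t)=\dot x(t_0)+\int_{t_0}^t\ddot x$), satisfying $\frac{\alpha}{t^q}\dot x(t)+\operatorname{proj}_{C(x(t))+\frac{\beta}{t^p}x(t)+\ddot x(t)}(0)=0$ for a.e. $t\ge t_0$, $x(t_0)=x_0$, $\dot x(t_0)=v_0$. *)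

theory Defs
  imports "HOL-Analysis.Analysis"
begin

text \<open>Metric projection of y onto a set K (unique nearest point; well defined for
  nonempty closed convex K in a Hilbert space).\<close>
definition proj_set :: "'a::real_inner set \<Rightarrow> 'a \<Rightarrow> 'a" where
  "proj_set K y = (THE z. z \<in> K \<and> (\<forall>w\<in>K. dist y z \<le> dist y w))"

definition abs_cont_on :: "real set \<Rightarrow> (real \<Rightarrow> 'a::real_normed_vector) \<Rightarrow> bool" where
  "abs_cont_on S g \<longleftrightarrow>
     (\<forall>\<epsilon>>0. \<exists>\<delta>>0. \<forall>(n::nat) (a::nat \<Rightarrow> real) b.
        (\<forall>k<n. a k \<in> S \<and> b k \<in> S \<and> a k \<le> b k) \<and>
        disjoint_family_on (\<lambda>k. {a k<..<b k}) {..<n} \<and>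
        (\<Sum>k<n. b k - a k) < \<delta> \<longrightarrow>
        (\<Sum>k<n. norm (g (b k) - g (a k))) < \<epsilon>)"

definition Cset :: "(nat \<Rightarrow> 'a \<Rightarrow> 'a::real_inner) \<Rightarrow> nat \<Rightarrow> 'a \<Rightarrow> 'a set" where
  "Cset df m y = convex hull ((\<lambda>i. df i y) ` {1..m})"

definition level_set :: "(nat \<Rightarrow> 'a \<Rightarrow> real) \<Rightarrow> nat \<Rightarrow> (nat \<Rightarrow> real) \<Rightarrow> 'a set" where
  "level_set f m b = {y. \<forall>i\<in>{1..m}. f i y \<le> b i}"

definition mtrigs_solution ::
  "(nat \<Rightarrow> 'a \<Rightarrow> 'a::{real_inner,complete_space}) \<Rightarrow> nat \<Rightarrow> real \<Rightarrow> real \<Rightarrow> real \<Rightarrow> real \<Rightarrow> real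
    \<Rightarrow> 'a \<Rightarrow> 'a \<Rightarrow> (real \<Rightarrow> 'a) \<Rightarrow> (real \<Rightarrow> 'a) \<Rightarrow> (real \<Rightarrow> 'a) \<Rightarrow> bool" where
  "mtrigs_solution df m t0 \<alpha> \<beta> q p x0 v0 x xd xdd \<longleftrightarrow>
     (\<forall>t\<ge>t0. (x has_vector_derivative xd t) (at t within {t0..})) \<and>
     continuous_on {t0..} xd \<and>
     (\<forall>T\<ge>t0. abs_cont_on {t0..T} xd) \<and>
     (AE t in lborel. t \<ge> t0 \<longrightarrow> (xd has_vector_derivative xdd t) (at t within {t0..})) \<and>
     xdd \<in> borel_measurable (restrict_space lebesgue {t0..}) \<and>
     (\<forall>t\<ge>t0. (xdd has_integral (xd t - xd t0)) {t0..t}) \<and>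
     (AE t in lborel. t \<ge> t0 \<longrightarrow>
        (\<alpha> / t powr q) *\<^sub>R xd t
        + proj_set ((\<lambda>c. c + (\<beta> / t powr p) *\<^sub>R x t + xdd t) ` Cset df m (x t)) 0 = 0) \<and>
     x t0 = x0 \<and> xd t0 = v0"

end

theory Submission
  imports Defs
begin


lemma proj_char:
  fixes K :: "'a::real_inner set"
  assumes K: "compact K" "convex K" "K \<noteq> {}"
  shows "proj_set K 0 \<in> K \<and> (\<forall>k\<in>K. proj_set K 0 \<bullet> (k - proj_set K 0) \<ge> 0)"
proof -
  let ?P = "\<lambda>z. z \<in> K \<and> (\<forall>w\<in>K. dist 0 z \<le> dist 0 w)"
  obtain z where z: "z \<in> K" "\<forall>w\<in>K. norm z \<le> norm w"
    using continuous_attains_inf[OF K(1) K(3), of norm] by (auto intro: continuous_intros)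
  have ex: "?P z" using z by simp
  have uniq: "z1 = z2" if "?P z1" "?P z2" for z1 z2
  proof -
    have n: "norm z1 = norm z2" using that by (simp add: order_antisym)
    have mid: "(1/2) *\<^sub>R z1 + (1/2) *\<^sub>R z2 \<in> K"
      using K(2) that by (auto simp: convex_def)
    have "norm z1 \<le> norm ((1/2) *\<^sub>R z1 + (1/2) *\<^sub>R z2)" using that mid by simp
    then have "norm z1 ^ 2 \<le> norm ((1/2) *\<^sub>R z1 + (1/2) *\<^sub>R z2) ^2"
      by (simp add: power_mono)
    moreover have "norm ((1/2) *\<^sub>R z1 + (1/2) *\<^sub>R z2) ^2 = (norm z1^2 + norm z2^2)/2 - norm (z1 - z2)^2/4"
      by (simp add: power2_norm_eq_inner inner_add_left inner_add_right inner_diff_left inner_diff_right inner_commute field_simps)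
    ultimately have "norm (z1 - z2)^2 \<le> 0" using n by simp
    then show ?thesis by simp
  qed
  have Pz: "?P (proj_set K 0)"
    unfolding proj_set_def apply (rule theI[of _ z]) using ex uniq by blast+
  then have w: "proj_set K 0 \<in> K" "\<And>v. v\<in>K \<Longrightarrow> norm (proj_set K 0) \<le> norm v" by auto
  define w0 where "w0 = proj_set K 0"
  have "w0 \<bullet> (k - w0) \<ge> 0" if k: "k \<in> K" for k
  proof (rule ccontr)
    assume nc: "\<not> ?thesis"
    define c where "c = w0 \<bullet> (k - w0)"
    define d where "d = k - w0"
    have c: "c < 0" using nc c_def by simp
    have "d \<noteq> 0" using c c_def d_def by auto
    then have dd: "d \<bullet> d > 0" by simp
    define s where "s = min 1 (- c / (d \<bullet> d))"
    have s: "0 < s" "s \<le> 1" "s \<le> - c / (d \<bullet> d)" using c dd by (auto simp: s_def divide_neg_pos)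
    have "(1 - s) *\<^sub>R w0 + s *\<^sub>R k \<in> K"
      using K(2) k w(1) s unfolding w0_def convex_def by auto
    moreover have "(1 - s) *\<^sub>R w0 + s *\<^sub>R k = w0 + s *\<^sub>R d" by (simp add: d_def algebra_simps)
    ultimately have "norm w0 \<le> norm (w0 + s *\<^sub>R d)" using w(2) w0_def by auto
    then have "norm w0 ^2 \<le> norm (w0 + s *\<^sub>R d) ^2" by (simp add: power_mono)
    also have "norm (w0 + s *\<^sub>R d) ^2 = norm w0 ^2 + 2 * s * c + s^2 * (d \<bullet> d)"
      unfolding power2_norm_eq_inner by (simp add: inner_add_left inner_add_right inner_diff_left inner_diff_right c_def d_def inner_commute algebra_simps power2_eq_square)
    finally have "0 \<le> 2 * s * c + s^2 * (d \<bullet> d)" by simp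
    moreover have "s^2 * (d \<bullet> d) \<le> s * (- c)"
    proof -
      have "s * (d \<bullet> d) \<le> (- c / (d \<bullet> d)) * (d \<bullet> d)" using s(3) dd by (intro mult_right_mono) auto
      also have "\<dots> = - c" using dd by simp
      finally have "s * (d \<bullet> d) \<le> - c" .
      then have "s * (s * (d \<bullet> d)) \<le> s * (-c)" using s(1) by (intro mult_left_mono) auto
      then show ?thesis by (simp add: power2_eq_square algebra_simps)
    qed
    ultimately have "0 \<le> s * c" by simp
    then show False using s(1) c by (simp add: mult_pos_neg zero_le_mult_iff)
  qed
  then show ?thesis using w(1) w0_def by auto
qed



lemma mono_lemma:
  fixes W :: "real \<Rightarrow> real"
  assumes ab: "a \<le> b" and cont: "continuous_on {a..b} W" and E: "negligible E"
   and der: "\<And>t. t \<in> {a<..<b} - E \<Longrightarrow> \<exists>D. (W has_real_derivative D) (at t) \<and> D \<le> 0"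
   and lip: "\<And>t. t \<in> E \<inter> {a..b} \<Longrightarrow> \<exists>T B. open T \<and> t \<in> T \<and>
               (\<forall>y\<in>(E \<inter> {a..b}) \<inter> T. norm (W y - W t) \<le> B * norm (y - t))"
  shows "W b \<le> W a"
proof (rule ccontr)
  assume "\<not> ?thesis"
  then have Wab: "W a < W b" by simp
  have "a \<noteq> b" using Wab by auto
  with ab have ab': "a < b" by simp
  define \<epsilon> where "\<epsilon> = (W b - W a) / (2 * (b - a))"
  have \<epsilon>: "\<epsilon> > 0" using Wab ab' by (simp add: \<epsilon>_def)
  define V where "V t = W t - \<epsilon> * (t - a)" for t
  have "V b - V a = (W b - W a) / 2" using ab' by (simp add: V_def \<epsilon>_def field_simps)
  then have Vab: "V a < V b" using Wab by simp
  have contV: "continuous_on {a..b} V" unfolding V_def by (intro continuous_intros cont)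
  have negV: "negligible (V ` (E \<inter> {a..b}))"
  proof (rule negligible_locally_Lipschitz_image)
    show "DIM(real) \<le> DIM(real)" by simp
    show "negligible (E \<inter> {a..b})" using E by (rule negligible_subset) auto
    fix t assume t: "t \<in> E \<inter> {a..b}"
    from lip[OF t] obtain T B where T: "open T" "t \<in> T"
      and B: "\<forall>y\<in>(E \<inter> {a..b}) \<inter> T. norm (W y - W t) \<le> B * norm (y - t)" by blast
    have "norm (V y - V t) \<le> (B + \<epsilon>) * norm (y - t)" if "y \<in> (E \<inter> {a..b}) \<inter> T" for y
    proof -
      have "V y - V t = (W y - W t) - \<epsilon> * (y - t)" by (simp add: V_def algebra_simps)
      then have "norm (V y - V t) \<le> norm (W y - W t) + \<epsilon> * norm (y - t)"
        using \<epsilon> by (simp add: abs_mult abs_triangle_ineq4 order_trans[OF abs_triangle_ineq4])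
      also have "\<dots> \<le> B * norm (y - t) + \<epsilon> * norm (y - t)" using B that by simp
      finally show ?thesis by (simp add: algebra_simps)
    qed
    then show "\<exists>T B. open T \<and> t \<in> T \<and> (\<forall>y\<in>(E \<inter> {a..b}) \<inter> T. norm (V y - V t) \<le> B * norm (y - t))"
      using T by blast
  qed
  have "\<not> {V a<..<V b} \<subseteq> V ` (E \<inter> {a..b})"
  proof
    assume "{V a<..<V b} \<subseteq> V ` (E \<inter> {a..b})"
    then have "negligible {V a<..<V b}" using negV negligible_subset by blast
    moreover have "\<not> negligible {V a<..<V b}"
      using Vab by (intro open_not_negligible) auto
    ultimately show False by blast
  qed
  then obtain y where y: "V a < y" "y < V b" "y \<notin> V ` (E \<inter> {a..b})" by (force simp: subset_iff)
  define S where "S = {a..b} \<inter> V -` {..y}"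
  have clS: "closed S" unfolding S_def
    by (rule continuous_closed_preimage[OF contV]) auto
  have aS: "a \<in> S" using y ab by (simp add: S_def)
  have bddS: "bdd_above S" unfolding S_def by (rule bdd_aboveI[of _ b]) auto
  define s where "s = Sup S"
  have sS: "s \<in> S" unfolding s_def using aS bddS clS by (intro closed_contains_Sup) auto
  have sle: "x \<in> S \<Longrightarrow> x \<le> s" for x unfolding s_def using bddS by (simp add: cSup_upper)
  have s_ab: "a \<le> s" "s \<le> b" "V s \<le> y" using sS by (auto simp: S_def)
  obtain x where x: "s \<le> x" "x \<le> b" "V x = y"
    using IVT'[of V s y b] s_ab y continuous_on_subset[OF contV] by fastforce
  have "x \<in> S" using x s_ab by (simp add: S_def)
  then have "x = s" using sle x by force
  then have Vs: "V s = y" using x by simp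
  have "s \<noteq> a" using Vs y by auto
  moreover have "s \<noteq> b" using Vs y by auto
  ultimately have s_in: "a < s" "s < b" using s_ab by auto
  have "s \<notin> E" using y Vs s_ab by auto
  then obtain D where D: "(W has_real_derivative D) (at s)" "D \<le> 0" using der s_in by auto
  have "(V has_real_derivative (D - \<epsilon>)) (at s)"
    unfolding V_def by (rule derivative_eq_intros D refl | simp)+
  then obtain d where d: "d > 0" "\<And>h. h > 0 \<Longrightarrow> h < d \<Longrightarrow> V s > V (s + h)"
    using DERIV_neg_dec_right[where f=V and x=s and l="D - \<epsilon>"] D \<epsilon> by force
  define h where "h = min (d/2) ((b - s)/2)"
  have h: "h > 0" "h < d" "s + h \<le> b" using d(1) s_in unfolding h_def by (auto simp: min_def field_simps)
  have "V (s + h) < y" using d(2)[OF h(1,2)] Vs by simp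
  then have "s + h \<in> S" using h s_in by (simp add: S_def)
  then show False using sle h by force
qed



lemma pointwise:
  fixes df :: "nat \<Rightarrow> 'a \<Rightarrow> 'a::{real_inner,complete_space}"
  assumes m: "1 \<le> m" and a: "a > 0"
    and eq: "a *\<^sub>R v + proj_set ((\<lambda>c. c + u) ` Cset df m y) 0 = 0"
  shows "(\<forall>i\<in>{1..m}. v \<bullet> (df i y + u) \<le> - a * (norm v)\<^sup>2) \<and> (\<exists>g\<in>Cset df m y. u = - a *\<^sub>R v - g)"
proof -
  let ?C = "Cset df m y"
  let ?K = "(\<lambda>c. c + u) ` ?C"
  have fin: "finite ((\<lambda>i. df i y) ` {1..m})" by simp
  have ne: "(\<lambda>i. df i y) ` {1..m} \<noteq> {}" using m by auto
  have cC: "compact ?C" unfolding Cset_def by (rule finite_imp_compact_convex_hull[OF fin])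
  have "compact ?K" by (rule compact_continuous_image[OF _ cC]) (intro continuous_intros)
  moreover have "convex ?K"
  proof -
    have "?K = (+) u ` ?C" by (auto simp: add.commute)
    moreover have "convex ?C" unfolding Cset_def by simp
    ultimately show ?thesis by simp
  qed
  moreover have "?K \<noteq> {}" using ne unfolding Cset_def by auto
  ultimately have P: "proj_set ?K 0 \<in> ?K" "\<forall>k\<in>?K. proj_set ?K 0 \<bullet> (k - proj_set ?K 0) \<ge> 0"
    using proj_char by blast+
  define w where "w = proj_set ?K 0"
  have w: "w = - a *\<^sub>R v" using eq w_def by (simp add: eq_neg_iff_add_eq_0 add.commute)
  have A: "v \<bullet> (df i y + u) \<le> - a * (norm v)\<^sup>2" if i: "i \<in> {1..m}" for i
  proof -
    have "df i y \<in> ?C" unfolding Cset_def using i by (intro hull_inc) auto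
    then have "df i y + u \<in> ?K" by auto
    then have "w \<bullet> (df i y + u - w) \<ge> 0" using P w_def by blast
    then have "- a * (v \<bullet> (df i y + u)) - a * a * (v \<bullet> v) \<ge> 0"
      by (simp add: w inner_diff_right algebra_simps)
    then have "a * (v \<bullet> (df i y + u) + a * (v \<bullet> v)) \<le> 0" by (simp add: algebra_simps)
    then have "v \<bullet> (df i y + u) + a * (v \<bullet> v) \<le> 0" using a by (simp add: mult_le_0_iff)
    then show ?thesis by (simp add: power2_norm_eq_inner)
  qed
  from P(1) obtain g where g: "g \<in> ?C" "w = g + u" using w_def by auto
  then have "u = - a *\<^sub>R v - g" using w by (simp add: algebra_simps)
  with A g show ?thesis by blast
qed

lemma W_deriv:
  fixes x xd :: "real \<Rightarrow> 'a::real_inner"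
  assumes t: "t > 0"
    and dx: "(x has_vector_derivative xd t) (at t within S)"
    and dxd: "(xd has_vector_derivative xdd) (at t within S)"
    and df: "(f has_derivative (\<lambda>h. g \<bullet> h)) (at (x t))"
  shows "((\<lambda>s. f (x s) + \<beta> / (2 * s powr p) * (norm (x s))\<^sup>2 + (norm (xd s))\<^sup>2 / 2)
          has_real_derivative (g \<bullet> xd t - p * \<beta> / (2 * t powr (p + 1)) * (norm (x t))\<^sup>2
             + \<beta> / (2 * t powr p) * (2 * (x t \<bullet> xd t)) + xd t \<bullet> xdd)) (at t within S)"
proof -
  have d1: "((\<lambda>s. f (x s)) has_real_derivative g \<bullet> xd t) (at t within S)"
  proof -
    have "((\<lambda>s. f (x s)) has_derivative (\<lambda>h. g \<bullet> (h *\<^sub>R xd t))) (at t within S)"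
      using has_derivative_compose[OF dx[unfolded has_vector_derivative_def] df] .
    then show ?thesis unfolding has_field_derivative_def
      by (rule has_derivative_eq_rhs) (auto simp: mult.commute)
  qed
  have d2: "((\<lambda>s. x s \<bullet> x s) has_real_derivative 2 * (x t \<bullet> xd t)) (at t within S)"
  proof -
    have "((\<lambda>s. x s \<bullet> x s) has_derivative (\<lambda>h. x t \<bullet> (h *\<^sub>R xd t) + (h *\<^sub>R xd t) \<bullet> x t)) (at t within S)"
      using has_derivative_inner[OF dx[unfolded has_vector_derivative_def] dx[unfolded has_vector_derivative_def]] .
    then show ?thesis unfolding has_field_derivative_def
      by (rule has_derivative_eq_rhs) (auto simp: inner_commute algebra_simps)
  qed
  have d3: "((\<lambda>s. xd s \<bullet> xd s) has_real_derivative 2 * (xd t \<bullet> xdd)) (at t within S)"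
  proof -
    have "((\<lambda>s. xd s \<bullet> xd s) has_derivative (\<lambda>h. xd t \<bullet> (h *\<^sub>R xdd) + (h *\<^sub>R xdd) \<bullet> xd t)) (at t within S)"
      using has_derivative_inner[OF dxd[unfolded has_vector_derivative_def] dxd[unfolded has_vector_derivative_def]] .
    then show ?thesis unfolding has_field_derivative_def
      by (rule has_derivative_eq_rhs) (auto simp: inner_commute algebra_simps)
  qed
  have d4: "((\<lambda>s. \<beta> / (2 * s powr p)) has_real_derivative - (p * \<beta> / (2 * t powr (p + 1)))) (at t within S)"
  proof -
    have "((\<lambda>s. \<beta> / (2 * s powr p)) has_real_derivative
            - (\<beta> * (2 * (p * t powr (p - 1)))) / (2 * t powr p)^2) (at t)"
      using t by (auto intro!: derivative_eq_intros simp: power2_eq_square)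
    moreover have "- (\<beta> * (2 * (p * t powr (p - 1)))) / (2 * t powr p)^2 = - (p * \<beta> / (2 * t powr (p + 1)))"
      using t by (simp add: powr_diff powr_add field_simps power2_eq_square)
    ultimately show ?thesis by (auto intro: has_field_derivative_at_within)
  qed
  have e2: "(\<lambda>s. (norm (x s))\<^sup>2) = (\<lambda>s. x s \<bullet> x s)" by (simp add: power2_norm_eq_inner)
  have e3: "(\<lambda>s. (norm (xd s))\<^sup>2) = (\<lambda>s. xd s \<bullet> xd s)" by (simp add: power2_norm_eq_inner)
  have "((\<lambda>s. f (x s) + \<beta> / (2 * s powr p) * (x s \<bullet> x s) + (xd s \<bullet> xd s) / 2)
          has_real_derivative (g \<bullet> xd t + (- (p * \<beta> / (2 * t powr (p + 1))) * (x t \<bullet> x t)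
             + 2 * (x t \<bullet> xd t) * (\<beta> / (2 * t powr p))) + 2 * (xd t \<bullet> xdd) / 2)) (at t within S)"
    by (intro DERIV_add d1 DERIV_mult[OF d4 d2] DERIV_cdivide[OF d3])
  then show ?thesis unfolding power2_norm_eq_inner
    by (rule DERIV_cong) (simp add: algebra_simps)
qed

lemma deriv_loc_lip:
  fixes f :: "real \<Rightarrow> real"
  assumes "(f has_real_derivative D) (at t within S)"
  shows "\<exists>T B. open T \<and> t \<in> T \<and> (\<forall>y\<in>S \<inter> T. \<bar>f y - f t\<bar> \<le> B * \<bar>y - t\<bar>)"
proof -
  have "((\<lambda>y. (f y - f t) / (y - t)) \<longlongrightarrow> D) (at t within S)"
    using assms by (simp add: has_field_derivative_iff)
  then have "eventually (\<lambda>y. dist ((f y - f t) / (y - t)) D < 1) (at t within S)"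
    by (rule tendstoD) simp
  then obtain T where T: "open T" "t \<in> T" "\<And>y. y \<in> T \<Longrightarrow> y \<in> S \<Longrightarrow> y \<noteq> t \<Longrightarrow> dist ((f y - f t) / (y - t)) D < 1"
    unfolding eventually_at_topological by blast
  have "\<bar>f y - f t\<bar> \<le> (\<bar>D\<bar> + 1) * \<bar>y - t\<bar>" if "y \<in> S \<inter> T" for y
  proof (cases "y = t")
    case True then show ?thesis by simp
  next
    case False
    have q: "\<bar>(f y - f t) / (y - t) - D\<bar> < 1" using T(3)[of y] that False by (auto simp: dist_real_def)
    have "\<bar>(f y - f t) / (y - t)\<bar> \<le> \<bar>D\<bar> + 1" using q by linarith
    then show ?thesis using False by (simp add: abs_divide divide_le_eq)
  qed
  then show ?thesis using T by blast
qed


lemma A_deriv: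
  fixes x xd :: "real \<Rightarrow> 'a::real_inner"
  assumes t: "t > 0"
    and dx: "(x has_vector_derivative xd t) (at t within S)"
    and df: "(f has_derivative (\<lambda>h. g \<bullet> h)) (at (x t))"
  shows "\<exists>D. ((\<lambda>s. f (x s) + \<beta> / (2 * s powr p) * (norm (x s))\<^sup>2) has_real_derivative D) (at t within S)"
proof -
  have d1: "((\<lambda>s. f (x s)) has_real_derivative g \<bullet> xd t) (at t within S)"
  proof -
    have "((\<lambda>s. f (x s)) has_derivative (\<lambda>h. g \<bullet> (h *\<^sub>R xd t))) (at t within S)"
      using has_derivative_compose[OF dx[unfolded has_vector_derivative_def] df] .
    then show ?thesis unfolding has_field_derivative_def
      by (rule has_derivative_eq_rhs) (auto simp: mult.commute)
  qed
  have d2: "((\<lambda>s. x s \<bullet> x s) has_real_derivative 2 * (x t \<bullet> xd t)) (at t within S)"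
  proof -
    have "((\<lambda>s. x s \<bullet> x s) has_derivative (\<lambda>h. x t \<bullet> (h *\<^sub>R xd t) + (h *\<^sub>R xd t) \<bullet> x t)) (at t within S)"
      using has_derivative_inner[OF dx[unfolded has_vector_derivative_def] dx[unfolded has_vector_derivative_def]] .
    then show ?thesis unfolding has_field_derivative_def
      by (rule has_derivative_eq_rhs) (auto simp: inner_commute algebra_simps)
  qed
  have d4: "((\<lambda>s. \<beta> / (2 * s powr p)) has_real_derivative - (\<beta> * (2 * (p * t powr (p - 1)))) / (2 * t powr p)^2) (at t within S)"
  proof -
    have "((\<lambda>s. \<beta> / (2 * s powr p)) has_real_derivative - (\<beta> * (2 * (p * t powr (p - 1)))) / (2 * t powr p)^2) (at t)"
      using t by (auto intro!: derivative_eq_intros simp: power2_eq_square)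
    then show ?thesis by (rule has_field_derivative_at_within)
  qed
  show ?thesis unfolding power2_norm_eq_inner
    using DERIV_add[OF d1 DERIV_mult[OF d4 d2]] by blast
qed

lemma sq_lip:
  fixes a b :: "'a::real_normed_vector"
  assumes "norm a \<le> c" "norm b \<le> c"
  shows "\<bar>(norm a)\<^sup>2 / 2 - (norm b)\<^sup>2 / 2\<bar> \<le> c * norm (a - b)"
proof -
  have e: "(norm a)\<^sup>2 / 2 - (norm b)\<^sup>2 / 2 = (norm a - norm b) * ((norm a + norm b) / 2)"
    by (simp add: power2_eq_square algebra_simps add_divide_distrib diff_divide_distrib)
  have "\<bar>(norm a)\<^sup>2 / 2 - (norm b)\<^sup>2 / 2\<bar> = \<bar>norm a - norm b\<bar> * ((norm a + norm b) / 2)"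
    unfolding e abs_mult by simp
  also have "\<dots> \<le> norm (a - b) * c"
    using assms by (intro mult_mono norm_triangle_ineq3) auto
  finally show ?thesis by (simp add: mult.commute)
qed



theorem mainTheorem10:
  fixes f :: "nat \<Rightarrow> 'a::{real_inner,complete_space} \<Rightarrow> real"
    and df :: "nat \<Rightarrow> 'a \<Rightarrow> 'a"
    and m :: nat
    and t0 \<alpha> \<beta> q p :: real
    and x0 v0 :: 'a
    and x xd xdd :: "real \<Rightarrow> 'a"
  assumes m: "1 \<le> m"
    and convex: "\<And>i. i \<in> {1..m} \<Longrightarrow> convex_on UNIV (f i)"
    and grad: "\<And>i y. i \<in> {1..m} \<Longrightarrow> (f i has_derivative (\<lambda>h. df i y \<bullet> h)) (at y)"
    and lip: "\<And>i. i \<in> {1..m} \<Longrightarrow> \<exists>L. L-lipschitz_on UNIV (df i)"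
    and t0: "t0 > 0" and \<alpha>: "\<alpha> > 0" and \<beta>: "\<beta> > 0"
    and q: "0 < q" "q \<le> 1" and p: "0 < p" "p \<le> 2"
    and sol: "mtrigs_solution df m t0 \<alpha> \<beta> q p x0 v0 x xd xdd"
  shows "(\<forall>i\<in>{1..m}. AE t in lborel. t \<ge> t0 \<longrightarrow>
            (\<exists>D. ((\<lambda>s. f i (x s) + \<beta> / (2 * s powr p) * (norm (x s))\<^sup>2 + (norm (xd s))\<^sup>2 / 2)
                    has_real_derivative D) (at t within {t0..}) \<and>
                 D \<le> - (p * \<beta> / (2 * t powr (p + 1))) * (norm (x t))\<^sup>2
                      - \<alpha> / t powr q * (norm (xd t))\<^sup>2 \<and>
                 - (p * \<beta> / (2 * t powr (p + 1))) * (norm (x t))\<^sup>2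
                      - \<alpha> / t powr q * (norm (xd t))\<^sup>2 \<le> 0))
       \<and> (\<forall>t\<ge>t0. x t \<in> level_set f m
            (\<lambda>i. f i x0 + (\<beta> / (2 * t0 powr p) * (norm x0)\<^sup>2 + (norm v0)\<^sup>2 / 2)))"
proof -
  from sol have xder: "\<And>t. t \<ge> t0 \<Longrightarrow> (x has_vector_derivative xd t) (at t within {t0..})"
   and xdc: "continuous_on {t0..} xd"
   and ae1: "AE t in lborel. t \<ge> t0 \<longrightarrow> (xd has_vector_derivative xdd t) (at t within {t0..})"
   and int: "\<And>t. t \<ge> t0 \<Longrightarrow> (xdd has_integral (xd t - xd t0)) {t0..t}"
   and ae2: "AE t in lborel. t \<ge> t0 \<longrightarrow>
        (\<alpha> / t powr q) *\<^sub>R xd t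
        + proj_set ((\<lambda>c. c + (\<beta> / t powr p) *\<^sub>R x t + xdd t) ` Cset df m (x t)) 0 = 0"
   and x0: "x t0 = x0" and v0: "xd t0 = v0"
    unfolding mtrigs_solution_def by auto
  define good where "good t \<longleftrightarrow> (xd has_vector_derivative xdd t) (at t within {t0..}) \<and>
        (\<alpha> / t powr q) *\<^sub>R xd t
        + proj_set ((\<lambda>c. c + (\<beta> / t powr p) *\<^sub>R x t + xdd t) ` Cset df m (x t)) 0 = 0" for t
  have ae: "AE t in lborel. t \<ge> t0 \<longrightarrow> good t" using ae1 ae2 unfolding good_def
    by eventually_elim auto
  define W where "W i s = f i (x s) + \<beta> / (2 * s powr p) * (norm (x s))\<^sup>2 + (norm (xd s))\<^sup>2 / 2" for i s
  define bnd where "bnd t = - (p * \<beta> / (2 * t powr (p + 1))) * (norm (x t))\<^sup>2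
                      - \<alpha> / t powr q * (norm (xd t))\<^sup>2" for t
  have key: "(\<forall>i\<in>{1..m}. xd t \<bullet> (df i (x t) + ((\<beta> / t powr p) *\<^sub>R x t + xdd t)) \<le> - (\<alpha> / t powr q) * (norm (xd t))\<^sup>2)
     \<and> (\<exists>g\<in>Cset df m (x t). (\<beta> / t powr p) *\<^sub>R x t + xdd t = - (\<alpha> / t powr q) *\<^sub>R xd t - g)"
    if t: "t \<ge> t0" "good t" for t
  proof -
    have "(\<lambda>c. c + (\<beta> / t powr p) *\<^sub>R x t + xdd t) = (\<lambda>c. c + ((\<beta> / t powr p) *\<^sub>R x t + xdd t))"
      by (simp add: add.assoc)
    moreover have "(\<alpha> / t powr q) *\<^sub>R xd t + proj_set ((\<lambda>c. c + (\<beta> / t powr p) *\<^sub>R x t + xdd t) ` Cset df m (x t)) 0 = 0"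
      using t(2) unfolding good_def by blast
    ultimately have eq: "(\<alpha> / t powr q) *\<^sub>R xd t + proj_set ((\<lambda>c. c + ((\<beta> / t powr p) *\<^sub>R x t + xdd t)) ` Cset df m (x t)) 0 = 0"
      by metis
    have "\<alpha> / t powr q > 0" using \<alpha> t0 t by simp
    from pointwise[OF m this eq] show ?thesis .
  qed
  have P1: "\<exists>D. (W i has_real_derivative D) (at t within {t0..}) \<and> D \<le> bnd t \<and> bnd t \<le> 0"
    if t: "t \<ge> t0" "good t" and i: "i \<in> {1..m}" for t i
  proof -
    have tp: "t > 0" using t t0 by simp
    have dxd: "(xd has_vector_derivative xdd t) (at t within {t0..})" using t(2) good_def by simp
    define D where "D = df i (x t) \<bullet> xd t - p * \<beta> / (2 * t powr (p + 1)) * (norm (x t))\<^sup>2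
             + \<beta> / (2 * t powr p) * (2 * (x t \<bullet> xd t)) + xd t \<bullet> xdd t"
    have dW: "(W i has_real_derivative D) (at t within {t0..})"
      unfolding W_def D_def by (rule W_deriv[OF tp xder[OF t(1)] dxd grad[OF i]])
    have "D = xd t \<bullet> (df i (x t) + ((\<beta> / t powr p) *\<^sub>R x t + xdd t)) - p * \<beta> / (2 * t powr (p + 1)) * (norm (x t))\<^sup>2"
      unfolding D_def by (simp add: inner_add_right inner_commute algebra_simps)
    then have "D \<le> bnd t" using key[OF t] i unfolding bnd_def by auto
    moreover have "bnd t \<le> 0"
    proof -
      have "0 \<le> p * \<beta> / (2 * t powr (p + 1)) * (norm (x t))\<^sup>2" using p \<beta> tp by simp
      moreover have "0 \<le> \<alpha> / t powr q * (norm (xd t))\<^sup>2" using \<alpha> tp by simp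
      ultimately show ?thesis unfolding bnd_def by simp
    qed
    ultimately show ?thesis using dW by blast
  qed
  have part1: "\<forall>i\<in>{1..m}. AE t in lborel. t \<ge> t0 \<longrightarrow>
            (\<exists>D. ((\<lambda>s. f i (x s) + \<beta> / (2 * s powr p) * (norm (x s))\<^sup>2 + (norm (xd s))\<^sup>2 / 2)
                    has_real_derivative D) (at t within {t0..}) \<and>
                 D \<le> - (p * \<beta> / (2 * t powr (p + 1))) * (norm (x t))\<^sup>2
                      - \<alpha> / t powr q * (norm (xd t))\<^sup>2 \<and>
                 - (p * \<beta> / (2 * t powr (p + 1))) * (norm (x t))\<^sup>2
                      - \<alpha> / t powr q * (norm (xd t))\<^sup>2 \<le> 0)"
  proof
    fix i assume i: "i \<in> {1..m}"
    show "AE t in lborel. t \<ge> t0 \<longrightarrow>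
            (\<exists>D. ((\<lambda>s. f i (x s) + \<beta> / (2 * s powr p) * (norm (x s))\<^sup>2 + (norm (xd s))\<^sup>2 / 2)
                    has_real_derivative D) (at t within {t0..}) \<and>
                 D \<le> - (p * \<beta> / (2 * t powr (p + 1))) * (norm (x t))\<^sup>2
                      - \<alpha> / t powr q * (norm (xd t))\<^sup>2 \<and>
                 - (p * \<beta> / (2 * t powr (p + 1))) * (norm (x t))\<^sup>2
                      - \<alpha> / t powr q * (norm (xd t))\<^sup>2 \<le> 0)"
      using ae proof eventually_elim
      case (elim t)
      show ?case using elim P1[OF _ _ i] unfolding W_def bnd_def by blast
    qed
  qed
  obtain N where N: "{t \<in> space lborel. \<not> (t \<ge> t0 \<longrightarrow> good t)} \<subseteq> N"
      "emeasure lborel N = 0" "N \<in> sets lborel"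
    using ae by (rule AE_E)
  have negN: "negligible N"
    unfolding negligible_iff_null_sets using N(2,3) by (intro null_sets_completionI) auto
  have goodN: "good t" if "t \<ge> t0" "t \<notin> N" for t using N(1) that by auto
  have xc: "continuous_on {t0..} x"
    unfolding continuous_on_eq_continuous_within
    using xder has_vector_derivative_continuous by blast
  have part2: "f i (x T) \<le> f i x0 + (\<beta> / (2 * t0 powr p) * (norm x0)\<^sup>2 + (norm v0)\<^sup>2 / 2)"
    if T: "T \<ge> t0" and i: "i \<in> {1..m}" for T i
  proof -
    have sub: "{t0..T} \<subseteq> {t0..}" by auto
    have pos: "r > 0" if "r \<in> {t0..T}" for r using that t0 by auto
    have c1: "continuous_on {t0..T} (\<lambda>r. (\<alpha> / r powr q) *\<^sub>R xd r)"
      using pos t0 by (intro continuous_intros continuous_on_subset[OF xdc sub]) auto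
    have c2: "continuous_on {t0..T} (\<lambda>r. (\<beta> / r powr p) *\<^sub>R x r)"
      using pos t0 by (intro continuous_intros continuous_on_subset[OF xc sub]) auto
    have c3: "continuous_on {t0..T} (\<lambda>r. df j (x r))" if j: "j \<in> {1..m}" for j
    proof -
      obtain L where "L-lipschitz_on UNIV (df j)" using lip[OF j] by blast
      then have "continuous_on UNIV (df j)" by (rule lipschitz_on_continuous_on)
      then show ?thesis
        by (rule continuous_on_compose2[OF _ continuous_on_subset[OF xc sub]]) auto
    qed
    obtain M1 where M1: "\<And>r. r \<in> {t0..T} \<Longrightarrow> norm ((\<alpha> / r powr q) *\<^sub>R xd r) \<le> M1"
      using compact_imp_bounded[OF compact_continuous_image[OF c1 compact_Icc]]
      unfolding bounded_iff by blast
    obtain M2 where M2: "\<And>r. r \<in> {t0..T} \<Longrightarrow> norm ((\<beta> / r powr p) *\<^sub>R x r) \<le> M2"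
      using compact_imp_bounded[OF compact_continuous_image[OF c2 compact_Icc]]
      unfolding bounded_iff by blast
    have "\<forall>j\<in>{1..m}. \<exists>Rj. \<forall>r\<in>{t0..T}. norm (df j (x r)) \<le> Rj"
    proof
      fix j assume j: "j \<in> {1..m}"
      show "\<exists>Rj. \<forall>r\<in>{t0..T}. norm (df j (x r)) \<le> Rj"
        using compact_imp_bounded[OF compact_continuous_image[OF c3[OF j] compact_Icc]]
        unfolding bounded_iff by blast
    qed
    then obtain Rf where Rf: "\<And>j r. j \<in> {1..m} \<Longrightarrow> r \<in> {t0..T} \<Longrightarrow> norm (df j (x r)) \<le> Rf j"
      by metis
    define R where "R = (\<Sum>j\<in>{1..m}. \<bar>Rf j\<bar>)"
    have R: "norm (df j (x r)) \<le> R" if "j \<in> {1..m}" "r \<in> {t0..T}" for j r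
    proof -
      have "\<bar>Rf j\<bar> \<le> R" unfolding R_def using that(1)
        by (intro member_le_sum) auto
      then show ?thesis using Rf[OF that] by linarith
    qed
    obtain Mv where Mv: "\<And>r. r \<in> {t0..T} \<Longrightarrow> norm (xd r) \<le> Mv"
      using compact_imp_bounded[OF compact_continuous_image[OF continuous_on_subset[OF xdc sub] compact_Icc]]
      unfolding bounded_iff by blast
    define M where "M = \<bar>M1\<bar> + \<bar>R\<bar> + \<bar>M2\<bar>"
    have M0: "M \<ge> 0" unfolding M_def by simp
    have xddb: "norm (xdd r) \<le> M" if r: "r \<in> {t0..T}" "r \<notin> N" for r
    proof -
      have gr: "good r" using goodN r by auto
      from key[OF _ gr] r obtain g where g: "g \<in> Cset df m (x r)"
        "(\<beta> / r powr p) *\<^sub>R x r + xdd r = - (\<alpha> / r powr q) *\<^sub>R xd r - g" by auto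
      have "Cset df m (x r) \<subseteq> cball 0 R"
        unfolding Cset_def using R r by (intro hull_minimal) auto
      then have ng: "norm g \<le> R" using g(1) by auto
      have "xdd r = - ((\<alpha> / r powr q) *\<^sub>R xd r) - g - (\<beta> / r powr p) *\<^sub>R x r"
        using g(2) by (simp add: algebra_simps)
      then have "norm (xdd r) \<le> norm ((\<alpha> / r powr q) *\<^sub>R xd r) + norm g + norm ((\<beta> / r powr p) *\<^sub>R x r)"
        using norm_triangle_ineq4[of "- ((\<alpha> / r powr q) *\<^sub>R xd r) - g" "(\<beta> / r powr p) *\<^sub>R x r"]
          norm_triangle_ineq4[of "- ((\<alpha> / r powr q) *\<^sub>R xd r)" g]
        by (simp only: norm_minus_cancel)
      then show ?thesis using M1[OF r(1)] M2[OF r(1)] ng unfolding M_def by linarith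
    qed
    have lipxd0: "norm (xd u - xd s) \<le> M * (u - s)" if su: "t0 \<le> s" "s \<le> u" "u \<le> T" for s u
    proof -
      define e where "e = xd u - xd s"
      have lin: "bounded_linear (\<lambda>v. e \<bullet> v)" by (rule bounded_linear_inner_right)
      have iu: "((\<lambda>r. e \<bullet> xdd r) has_integral (e \<bullet> (xd u - xd t0))) {t0..u}"
        using has_integral_linear[OF int[of u] lin] su by (simp add: o_def)
      have is': "((\<lambda>r. e \<bullet> xdd r) has_integral (e \<bullet> (xd s - xd t0))) {t0..s}"
        using has_integral_linear[OF int[of s] lin] su by (simp add: o_def)
      have intu: "(\<lambda>r. e \<bullet> xdd r) integrable_on {t0..u}" using iu by blast
      have "integral {t0..s} (\<lambda>r. e \<bullet> xdd r) + integral {s..u} (\<lambda>r. e \<bullet> xdd r) = integral {t0..u} (\<lambda>r. e \<bullet> xdd r)"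
        using Henstock_Kurzweil_Integration.integral_combine[OF su(1,2) intu] .
      then have "integral {s..u} (\<lambda>r. e \<bullet> xdd r) = e \<bullet> (xd u - xd s)"
        using integral_unique[OF iu] integral_unique[OF is'] by (simp add: algebra_simps inner_diff_right)
      moreover have "(\<lambda>r. e \<bullet> xdd r) integrable_on {s..u}"
        using integrable_subinterval_real[OF intu] su by auto
      ultimately have isu: "((\<lambda>r. e \<bullet> xdd r) has_integral (e \<bullet> (xd u - xd s))) {s..u}"
        by (metis integrable_integral)
      define h where "h r = (if r \<in> N then 0 else e \<bullet> xdd r)" for r
      have ih: "(h has_integral (e \<bullet> (xd u - xd s))) {s..u}"
        by (rule has_integral_spike[OF negN _ isu]) (simp add: h_def)
      have hb: "norm (h r) \<le> norm e * M" if "r \<in> cbox s u" for r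
      proof (cases "r \<in> N")
        case True then show ?thesis using M0 by (simp add: h_def)
      next
        case False
        then have "norm (xdd r) \<le> M" using xddb that su by auto
        then have "\<bar>e \<bullet> xdd r\<bar> \<le> norm e * M"
          using Cauchy_Schwarz_ineq2[of e "xdd r"] by (meson mult_left_mono norm_ge_zero order_trans)
        then show ?thesis using False by (simp add: h_def)
      qed
      have "norm (e \<bullet> (xd u - xd s)) \<le> norm e * M * (u - s)"
        using has_integral_bound[where B="norm e * M" and f=h and i="e \<bullet> (xd u - xd s)" and a=s and b=u] ih hb M0 su by simp
      then have "norm e * norm e \<le> norm e * (M * (u - s))"
        using su by (simp add: e_def power2_norm_eq_inner[symmetric] power2_eq_square algebra_simps)
      then have "norm e \<le> M * (u - s)"
      proof (cases "norm e = 0")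
        case True then show ?thesis using M0 su by simp
      next
        case False then show ?thesis using \<open>norm e * norm e \<le> _\<close> by (simp add: mult_le_cancel_left_pos)
      qed
      then show ?thesis by (simp add: e_def)
    qed
    have lipxd: "norm (xd u - xd s) \<le> M * \<bar>u - s\<bar>" if "s \<in> {t0..T}" "u \<in> {t0..T}" for s u
    proof (cases "s \<le> u")
      case True then show ?thesis using lipxd0[of s u] that by auto
    next
      case False then show ?thesis using lipxd0[of u s] that by (auto simp: norm_minus_commute)
    qed
    define A where "A s = f i (x s) + \<beta> / (2 * s powr p) * (norm (x s))\<^sup>2" for s
    define B where "B s = (norm (xd s))\<^sup>2 / 2" for s
    have WAB: "W i s = A s + B s" for s unfolding W_def A_def B_def by simp
    have Ader: "\<exists>D. (A has_real_derivative D) (at s within {t0..})" if "s \<ge> t0" for s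
      unfolding A_def using A_deriv[where t=s and x=x and xd=xd and S="{t0..}" and f="f i" and g="df i (x s)" and \<beta>=\<beta> and p=p, OF _ xder[OF that] grad[OF i]] that t0 by auto
    have mono: "W i T \<le> W i t0"
    proof (rule mono_lemma[OF T _ negN])
      have "continuous_on {t0..T} A"
        unfolding continuous_on_eq_continuous_within
      proof
        fix s assume s: "s \<in> {t0..T}"
        then obtain D where "(A has_real_derivative D) (at s within {t0..})" using Ader by auto
        then have "(A has_real_derivative D) (at s within {t0..T})"
          by (rule has_field_derivative_subset) auto
        then show "continuous (at s within {t0..T}) A" by (rule DERIV_continuous)
      qed
      moreover have "continuous_on {t0..T} B"
        unfolding B_def by (intro continuous_intros continuous_on_subset[OF xdc sub]) auto
      ultimately show "continuous_on {t0..T} (W i)" unfolding WAB by (intro continuous_intros)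
    next
      fix s assume s: "s \<in> {t0<..<T} - N"
      then have "good s" using goodN by auto
      moreover have "s \<ge> t0" using s by auto
      ultimately obtain D where D0: "(W i has_real_derivative D) (at s within {t0..})" "D \<le> bnd s" "bnd s \<le> 0"
        using P1[OF _ _ i, of s] by blast
      then have D: "(W i has_real_derivative D) (at s within {t0..})" "D \<le> 0" by auto
      have "(W i has_real_derivative D) (at s within {t0<..})"
        by (rule has_field_derivative_subset[OF D(1)]) auto
      moreover have "at s within {t0<..} = at s" using s by (intro at_within_open) auto
      ultimately have "(W i has_real_derivative D) (at s)" by simp
      then show "\<exists>D. (W i has_real_derivative D) (at s) \<and> D \<le> 0" using D(2) by blast
    next
      fix s assume s: "s \<in> N \<inter> {t0..T}"
      then obtain D where "(A has_real_derivative D) (at s within {t0..})" using Ader by auto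
      from deriv_loc_lip[OF this] obtain T1 B1 where T1: "open T1" "s \<in> T1"
        "\<forall>y\<in>{t0..} \<inter> T1. \<bar>A y - A s\<bar> \<le> B1 * \<bar>y - s\<bar>" by blast
      have "norm (W i y - W i s) \<le> (B1 + Mv * M) * norm (y - s)" if y: "y \<in> (N \<inter> {t0..T}) \<inter> T1" for y
      proof -
        have a: "\<bar>A y - A s\<bar> \<le> B1 * \<bar>y - s\<bar>" using T1(3) y by auto
        have "\<bar>B y - B s\<bar> \<le> Mv * norm (xd y - xd s)"
          unfolding B_def using sq_lip[OF Mv Mv] y s by auto
        also have "\<dots> \<le> Mv * (M * \<bar>y - s\<bar>)"
          using lipxd[of s y] y s Mv[of s] by (intro mult_left_mono) (auto intro: order_trans[OF norm_ge_zero])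
        finally have b: "\<bar>B y - B s\<bar> \<le> Mv * M * \<bar>y - s\<bar>" by simp
        have "\<bar>W i y - W i s\<bar> \<le> \<bar>A y - A s\<bar> + \<bar>B y - B s\<bar>" unfolding WAB by linarith
        then show ?thesis using a b by (simp add: algebra_simps)
      qed
      then show "\<exists>TT B. open TT \<and> s \<in> TT \<and> (\<forall>y\<in>(N \<inter> {t0..T}) \<inter> TT. norm (W i y - W i s) \<le> B * norm (y - s))"
        using T1 by blast
    qed
    have "0 \<le> \<beta> / (2 * T powr p) * (norm (x T))\<^sup>2" using \<beta> T t0 by simp
    then have "f i (x T) \<le> W i T" unfolding W_def by simp
    also note mono
    also have "W i t0 = f i x0 + (\<beta> / (2 * t0 powr p) * (norm x0)\<^sup>2 + (norm v0)\<^sup>2 / 2)"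
      unfolding W_def x0 v0 by simp
    finally show ?thesis .
  qed
  show ?thesis using part1 part2 unfolding level_set_def by auto
qed

end
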